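(* Let $\pi_1,\pi_2,\pi_3,\pi_4$ be paths of length $\ell$ in a simple graph such that $V(\pi_3)\cap V(\pi_4)\neq\emptyset$, $|E(\pi_3)\cup E(\pi_4)|=2\ell-j$ and $|(E(\pi_1)\cup E(\pi_2))\cap(E(\pi_3)\cup E(\pi_4))|=j'$, where $0\le j\le\ell$ and $1\le j'\le 2\ell-j$. Then $$|V(\pi_3)\cap V(\pi_4)|+|(V(\pi_3)\cup V(\pi_4))\cap(V(\pi_1)\cup V(\pi_2))|\ge j+j'+2.$$
   Context: A path of length $\ell$ is a sequence $(v_0,\dots,v_\ell)$ of distinct vertices with edges $(v_{i-1},v_i)$; $V(\pi)$ and $E(\pi)$ denote its vertex and edge sets. *)

theory Defs
  imports Main
begin

definition simple_graph :: "('a \<Rightarrow> 'a \<Rightarrow> bool) \<Rightarrow> bool" where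
  "simple_graph Adj \<longleftrightarrow> (\<forall>u v. Adj u v \<longrightarrow> Adj v u) \<and> (\<forall>v. \<not> Adj v v)"

definition is_path :: "('a \<Rightarrow> 'a \<Rightarrow> bool) \<Rightarrow> nat \<Rightarrow> 'a list \<Rightarrow> bool" where
  "is_path Adj l p \<longleftrightarrow> length p = Suc l \<and> distinct p \<and> (\<forall>i<l. Adj (p ! i) (p ! Suc i))"

definition path_verts :: "'a list \<Rightarrow> 'a set" where
  "path_verts p = set p"

definition path_edges :: "'a list \<Rightarrow> 'a set set" where
  "path_edges p = {{p ! i, p ! Suc i} | i. Suc i < length p}"

end

theory Submission
  imports Defs
begin

lemma edges_alt: "path_edges p = (\<lambda>i. {p!i, p!Suc i}) ` {i. Suc i < length p}"
  by (auto simp: path_edges_def)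

lemma finite_edges: "finite (path_edges p)"
proof -
  have "{i. Suc i < length p} \<subseteq> {..<length p}" by auto
  then have "finite {i. Suc i < length p}" using finite_subset by blast
  then show ?thesis unfolding edges_alt by simp
qed

lemma edges_sub: "e \<in> path_edges p \<Longrightarrow> e \<subseteq> set p"
  by (auto simp: path_edges_def)

lemma edge_inj_count:
  assumes "distinct P" "a < length P" "Y \<subseteq> set P" "P!a \<notin> Y"
  shows "card Y \<le> card {e \<in> path_edges P. e \<inter> Y \<noteq> {}}"
proof -
  define K where "K = {k. k < length P \<and> P!k \<in> Y}"
  have YK: "Y = (!) P ` K"
  proof
    show "Y \<subseteq> (!) P ` K"
    proof
      fix x assume x: "x \<in> Y"
      then obtain k where "k < length P" "P!k = x" using assms(3) x by (metis in_mono in_set_conv_nth)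
      then show "x \<in> (!) P ` K" using x by (auto simp: K_def)
    qed
  qed (auto simp: K_def)
  have injn: "inj_on ((!) P) K"
    using assms(1) by (auto simp: K_def inj_on_def nth_eq_iff_index_eq)
  define h where "h k = (if k < a then k else k - 1)" for k
  have aK: "a \<notin> K" using assms(4) by (auto simp: K_def)
  have injh: "inj_on h K"
  proof (rule inj_onI)
    fix x y assume "x \<in> K" "y \<in> K" "h x = h y"
    moreover have "x \<noteq> a" "y \<noteq> a" using aK \<open>x \<in> K\<close> \<open>y \<in> K\<close> by auto
    ultimately show "x = y" unfolding h_def by (auto split: if_splits)
  qed
  define g where "g i = {P!i, P!Suc i}" for i
  have injg: "inj_on g {i. Suc i < length P}"
  proof (rule inj_onI)
    fix i m assume i: "i \<in> {i. Suc i < length P}" and m: "m \<in> {i. Suc i < length P}" and e: "g i = g m"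
    from e have "P!i = P!m \<or> (P!i = P!Suc m \<and> P!Suc i = P!m)"
      unfolding g_def by (auto simp: doubleton_eq_iff)
    then show "i = m"
      using i m assms(1) by (auto simp: nth_eq_iff_index_eq)
  qed
  have hK: "h ` K \<subseteq> {i. Suc i < length P}"
  proof
    fix i assume "i \<in> h ` K"
    then obtain k where k: "k \<in> K" "i = h k" by auto
    have "k \<noteq> a" using k aK by auto
    then show "i \<in> {i. Suc i < length P}" using k assms(2) by (auto simp: h_def K_def)
  qed
  have gh: "g ` h ` K \<subseteq> {e \<in> path_edges P. e \<inter> Y \<noteq> {}}"
  proof
    fix e assume "e \<in> g ` h ` K"
    then obtain k where k: "k \<in> K" "e = g (h k)" by auto
    have "Suc (h k) < length P" using hK k by auto
    moreover have "k \<noteq> a" using k aK by auto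
    then have "P!k \<in> e" using k by (cases "k < a") (auto simp: g_def h_def)
    moreover have "P!k \<in> Y" using k by (auto simp: K_def)
    ultimately show "e \<in> {e \<in> path_edges P. e \<inter> Y \<noteq> {}}"
      using k by (auto simp: path_edges_def g_def)
  qed
  have "card Y = card K" using YK injn card_image by blast
  also have "\<dots> = card (h ` K)" using injh card_image by fastforce
  also have "\<dots> = card (g ` h ` K)" using card_image[OF inj_on_subset[OF injg hK]] by simp
  also have "\<dots> \<le> card {e \<in> path_edges P. e \<inter> Y \<noteq> {}}"
    by (rule card_mono[OF _ gh]) (simp add: finite_edges)
  finally show ?thesis .
qed

lemma core:
  assumes "distinct P" "distinct Q" "set P \<inter> set Q \<noteq> {}" "w \<in> set P" "w \<in> W"
    and "\<And>e. e \<in> F \<Longrightarrow> e \<subseteq> W"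
  shows "card (set P \<union> set Q - W) \<le> card ((path_edges P \<union> path_edges Q) - F)"
proof -
  define XP where "XP = set P - W"
  define XQ where "XQ = set Q - set P - W"
  obtain a where a: "a < length P" "P!a = w" using assms(4) by (auto simp: in_set_conv_nth)
  obtain s where s: "s \<in> set P" "s \<in> set Q" using assms(3) by auto
  obtain b where b: "b < length Q" "Q!b = s" using s by (auto simp: in_set_conv_nth)
  have c1: "card XP \<le> card {e \<in> path_edges P. e \<inter> XP \<noteq> {}}"
    by (rule edge_inj_count[OF assms(1) a(1)]) (use a assms(5) in \<open>auto simp: XP_def\<close>)
  have c2: "card XQ \<le> card {e \<in> path_edges Q. e \<inter> XQ \<noteq> {}}"
    by (rule edge_inj_count[OF assms(2) b(1)]) (use b s in \<open>auto simp: XQ_def\<close>)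
  have s1: "{e \<in> path_edges P. e \<inter> XP \<noteq> {}} \<subseteq> path_edges P - F"
    using assms(6) by (auto simp: XP_def)
  have s2: "{e \<in> path_edges Q. e \<inter> XQ \<noteq> {}} \<subseteq> path_edges Q - path_edges P - F"
    using assms(6) edges_sub[of _ P] by (fastforce simp: XQ_def)
  have fin: "finite (path_edges P)" "finite (path_edges Q)" by (simp_all add: finite_edges)
  have "card XP \<le> card (path_edges P - F)"
    using c1 card_mono[OF _ s1] fin by (meson finite_Diff le_trans)
  moreover have "card XQ \<le> card (path_edges Q - path_edges P - F)"
    using c2 card_mono[OF _ s2] fin by (meson finite_Diff le_trans)
  moreover have "card (path_edges P - F) + card (path_edges Q - path_edges P - F)
      = card ((path_edges P \<union> path_edges Q) - F)"
  proof -
    have "(path_edges P \<union> path_edges Q) - F = (path_edges P - F) \<union> (path_edges Q - path_edges P - F)" by auto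
    moreover have "(path_edges P - F) \<inter> (path_edges Q - path_edges P - F) = {}" by auto
    ultimately show ?thesis using fin by (simp add: card_Un_disjoint)
  qed
  moreover have "card (set P \<union> set Q - W) = card XP + card XQ"
  proof -
    have "set P \<union> set Q - W = XP \<union> XQ" by (auto simp: XP_def XQ_def)
    moreover have "XP \<inter> XQ = {}" by (auto simp: XP_def XQ_def)
    ultimately show ?thesis by (simp add: card_Un_disjoint XP_def XQ_def)
  qed
  ultimately show ?thesis by linarith
qed

theorem lemma3p8:
  fixes Adj :: "'a \<Rightarrow> 'a \<Rightarrow> bool" and l j j' :: nat and p1 p2 p3 p4 :: "'a list"
  assumes "simple_graph Adj"
    and "is_path Adj l p1" and "is_path Adj l p2" and "is_path Adj l p3" and "is_path Adj l p4"
    and "path_verts p3 \<inter> path_verts p4 \<noteq> {}"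
    and "card (path_edges p3 \<union> path_edges p4) = 2 * l - j"
    and "card ((path_edges p1 \<union> path_edges p2) \<inter> (path_edges p3 \<union> path_edges p4)) = j'"
    and "j \<le> l" and "1 \<le> j'" and "j' \<le> 2 * l - j"
  shows "card (path_verts p3 \<inter> path_verts p4)
         + card ((path_verts p3 \<union> path_verts p4) \<inter> (path_verts p1 \<union> path_verts p2)) \<ge> j + j' + 2"
proof -
  define W where "W = (set p3 \<union> set p4) \<inter> (set p1 \<union> set p2)"
  define F where "F = (path_edges p1 \<union> path_edges p2) \<inter> (path_edges p3 \<union> path_edges p4)"
  have d3: "distinct p3" "length p3 = Suc l" and d4: "distinct p4" "length p4 = Suc l"
    using assms(4,5) by (auto simp: is_path_def)
  have FW: "\<And>e. e \<in> F \<Longrightarrow> e \<subseteq> W"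
    unfolding F_def W_def using edges_sub by blast
  have finF: "finite F" by (simp add: F_def finite_edges)
  have "F \<noteq> {}" using assms(8,10) F_def by auto
  then obtain e where e: "e \<in> F" by auto
  have "e \<noteq> {}" using e unfolding F_def by (auto simp: path_edges_def)
  then obtain w where w: "w \<in> W" using FW e by blast
  have int: "set p3 \<inter> set p4 \<noteq> {}" using assms(6) by (simp add: path_verts_def)
  have key: "card (set p3 \<union> set p4 - W) \<le> card ((path_edges p3 \<union> path_edges p4) - F)"
  proof (cases "w \<in> set p3")
    case True
    then show ?thesis using core[OF d3(1) d4(1) int True w FW] by simp
  next
    case False
    then have "w \<in> set p4" using w by (auto simp: W_def)
    then show ?thesis using core[OF d4(1) d3(1) _ _ w FW] int by (simp add: Un_commute Int_commute)
  qed
  have "card ((path_edges p3 \<union> path_edges p4) - F) = (2*l - j) - j'"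
    using card_Diff_subset[OF finF] assms(7,8) F_def by auto
  moreover have "card (set p3 \<union> set p4 - W) = card (set p3 \<union> set p4) - card W"
    by (rule card_Diff_subset) (auto simp: W_def)
  moreover have "card (set p3 \<union> set p4) + card (set p3 \<inter> set p4) = 2 * l + 2"
    using card_Un_Int[of "set p3" "set p4"] d3 d4 by (simp add: distinct_card)
  moreover have "card W \<le> card (set p3 \<union> set p4)"
    by (rule card_mono) (auto simp: W_def)
  ultimately show ?thesis using key assms(9,11)
    unfolding path_verts_def W_def[symmetric] by linarith
qed

end
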